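(* There exists a task in the two-party one-way communication (Holevo–Frenkel–Weiner) scenario for which the utility of one qubit of communication (with no pre-shared correlation) is higher than the utility of one classical bit of communication assisted by $1$ bit of shared randomness: there exist finite sets $\mathcal{X},\mathcal{B}$ and a payoff function $\beta$ such that $\sup_{P\in\mathcal{Q}}\beta(P)>\sup_{P\in\mathcal{C}_2}\beta(P)$.
   Context: Scenario: Alice receives an input $x$ from a finite set $\mathcal{X}$, Bob must output $b$ from a finite set $\mathcal{B}$; a correlation is $P=(P(b|x))$, a task is a real payoff function $\beta$ on correlations, and the utility of a resource is $\sup\beta(P)$ over correlations achievable with it. $\mathcal{C}$: correlations $P(b|x)=\sum_{m\in\{0,1\}}E(m|x)D(b|m)$ with $E(\cdot|x)$ a probability distribution on $\{0,1\}$ for each $x$ and $D(\cdot|m)$ a probability distribution on $\mathcal{B}$ for each $m$. $\mathcal{C}_2$ (one classical bit plus $1$ bit of shared randomness): correlations $qP_0+(1-q)P_1$ with $q\in[0,1]$ and $P_0,P_1\in\mathcal{C}$. $\mathcal{Q}$ (one qubit, no shared correlation): correlations $P(b|x)=\operatorname{Tr}(\rho_x\pi_b)$ with each $\rho_x$ a density operator on $\mathbb{C}^2$ and $\{\pi_b\}_{b\in\mathcal{B}}$ a POVM on $\mathbb{C}^2$. *)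

theory Defs
  imports "HOL-Analysis.Analysis"
begin

text \<open>Correlations P(b|x) are represented as functions P b x :: real, with the
 (harmless) convention that P b x = 0 outside B \<times> X, so that each correlation on
 (X,B) has a unique representative.\<close>

type_synonym corr = "nat \<Rightarrow> nat \<Rightarrow> real"

definition prob_dist :: "nat set \<Rightarrow> (nat \<Rightarrow> real) \<Rightarrow> bool" where
  "prob_dist S p \<longleftrightarrow> (\<forall>s\<in>S. 0 \<le> p s) \<and> (\<Sum>s\<in>S. p s) = 1"

text \<open>C: one classical bit, no shared randomness. E m x = E(m|x), D b m = D(b|m).\<close>
definition C_corr :: "nat set \<Rightarrow> nat set \<Rightarrow> corr set" where
  "C_corr X B = {P. \<exists>E D.
      (\<forall>x\<in>X. prob_dist {0,1} (\<lambda>m. E m x)) \<and>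
      (\<forall>m\<in>{0,1}. prob_dist B (\<lambda>b. D b m)) \<and>
      P = (\<lambda>b x. if b \<in> B \<and> x \<in> X then (\<Sum>m\<in>{0::nat,1}. E m x * D b m) else 0)}"

text \<open>C_2: one classical bit plus one bit of shared randomness.\<close>
definition C2_corr :: "nat set \<Rightarrow> nat set \<Rightarrow> corr set" where
  "C2_corr X B = {P. \<exists>q::real. 0 \<le> q \<and> q \<le> 1 \<and>
      (\<exists>P0\<in>C_corr X B. \<exists>P1\<in>C_corr X B. P = (\<lambda>b x. q * P0 b x + (1 - q) * P1 b x))}"

definition hermitian2 :: "complex^2^2 \<Rightarrow> bool" where
  "hermitian2 A \<longleftrightarrow> (\<forall>i j. A $ i $ j = cnj (A $ j $ i))"

definition psd2 :: "complex^2^2 \<Rightarrow> bool" where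
  "psd2 A \<longleftrightarrow> hermitian2 A \<and>
     (\<forall>v::complex^2. 0 \<le> Re (\<Sum>i\<in>UNIV. \<Sum>j\<in>UNIV. cnj (v $ i) * A $ i $ j * v $ j))"

definition density2 :: "complex^2^2 \<Rightarrow> bool" where
  "density2 \<rho> \<longleftrightarrow> psd2 \<rho> \<and> trace \<rho> = 1"

definition povm2 :: "nat set \<Rightarrow> (nat \<Rightarrow> complex^2^2) \<Rightarrow> bool" where
  "povm2 B \<pi> \<longleftrightarrow> (\<forall>b\<in>B. psd2 (\<pi> b)) \<and> (\<Sum>b\<in>B. \<pi> b) = mat 1"

text \<open>Q: one qubit, no shared correlation. P(b|x) = Tr(rho_x pi_b) (real for psd operators).\<close>
definition Q_corr :: "nat set \<Rightarrow> nat set \<Rightarrow> corr set" where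
  "Q_corr X B = {P. \<exists>\<rho> \<pi>.
      (\<forall>x\<in>X. density2 (\<rho> x)) \<and> povm2 B \<pi> \<and>
      P = (\<lambda>b x. if b \<in> B \<and> x \<in> X then Re (trace (\<rho> x ** \<pi> b)) else 0)}"

text \<open>Utility of a resource for task beta: sup of beta over achievable correlations
 (in the extended reals, since an arbitrary payoff need not be bounded).\<close>
definition utility :: "corr set \<Rightarrow> (corr \<Rightarrow> real) \<Rightarrow> ereal" where
  "utility S \<beta> = (SUP P\<in>S. ereal (\<beta> P))"

end

theory Submission
  imports Defs
begin

definition pr :: "real \<Rightarrow> complex \<Rightarrow> complex \<Rightarrow> complex^2^2" where
 "pr w a b = (\<chi> i j. complex_of_real w * (vector[a,b]::complex^2)$i * cnj ((vector[a,b]::complex^2)$j))"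

lemma pr_nth: "pr w a b $ i $ j = complex_of_real w * (vector[a,b]::complex^2)$i * cnj ((vector[a,b]::complex^2)$j)"
  by (simp add: pr_def)

lemma psd_pr: assumes "0 \<le> w" shows "psd2 (pr w a b)"
proof -
  have "hermitian2 (pr w a b)" unfolding hermitian2_def pr_nth by simp
  moreover have "0 \<le> Re (\<Sum>i\<in>UNIV. \<Sum>j\<in>UNIV. cnj (v $ i) * pr w a b $ i $ j * v $ j)" for v :: "complex^2"
  proof -
    define z where "z = cnj a * v$1 + cnj b * v$2"
    have "(\<Sum>i\<in>UNIV. \<Sum>j\<in>UNIV. cnj (v $ i) * pr w a b $ i $ j * v $ j) = complex_of_real w * (z * cnj z)"
      unfolding z_def sum_2 pr_nth by (simp add: algebra_simps)
    also have "\<dots> = complex_of_real (w * ((Re z)^2 + (Im z)^2))"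
      by (simp add: complex_mult_cnj)
    finally show ?thesis using assms by simp
  qed
  ultimately show ?thesis unfolding psd2_def by blast
qed

lemma trace_pr: "trace (pr w a b) = complex_of_real w * (a * cnj a + b * cnj b)"
  unfolding trace_def sum_2 pr_nth by (simp add: algebra_simps)

lemma tr_pr: "trace (pr w a b ** pr u c d) = complex_of_real (w*u) * ((cnj a * c + cnj b * d) * (a * cnj c + b * cnj d))"
  unfolding trace_def matrix_matrix_mult_def sum_2 pr_nth by (simp add: algebra_simps)

lemma no_rank2:
  fixes T :: "nat \<Rightarrow> nat \<Rightarrow> real" and K U V e f :: "nat \<Rightarrow> real"
  assumes h: "\<And>x b. x \<in> {0,1,2,3} \<Longrightarrow> b \<in> {1,2,4} \<Longrightarrow> T b x = K b + e x * U b + f x * V b"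
  and "T 1 0 = 0" "T 2 0 = 1/6" "T 4 0 = 1/6" "T 1 1 = 1/3" "T 2 1 = 1/6" "T 4 1 = 1/6"
      "T 1 2 = 1/6" "T 2 2 = 1/3" "T 4 2 = 1/6" "T 1 3 = 1/6" "T 2 3 = 1/6" "T 4 3 = 1/3"
  shows False
proof -
  have key: "\<And>a1 a2 a3 c1 c2 c3 u1 u2 u3 y1 y2 y3 :: real.
    (a1*u1+c1*y1)*((a2*u2+c2*y2)*(a3*u3+c3*y3) - (a2*u3+c2*y3)*(a3*u2+c3*y2))
   - (a1*u2+c1*y2)*((a2*u1+c2*y1)*(a3*u3+c3*y3) - (a2*u3+c2*y3)*(a3*u1+c3*y1))
   + (a1*u3+c1*y3)*((a2*u1+c2*y1)*(a3*u2+c3*y2) - (a2*u2+c2*y2)*(a3*u1+c3*y1)) = 0"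
    by algebra
  define m where "m x b = T b x - T b 0" for x b
  have mm: "m x b = (e x - e 0) * U b + (f x - f 0) * V b" if "x \<in> {0,1,2,3}" "b \<in> {1,2,4}" for x b
    using h[OF that] h[of 0 b] that unfolding m_def by (simp add: algebra_simps)
  have "m 1 1 * (m 2 2 * m 3 4 - m 2 4 * m 3 2) - m 1 2 * (m 2 1 * m 3 4 - m 2 4 * m 3 1)
      + m 1 4 * (m 2 1 * m 3 2 - m 2 2 * m 3 1) = 0"
    using key[of "e 1 - e 0" "U 1" "f 1 - f 0" "V 1" "e 2 - e 0" "U 2" "f 2 - f 0" "V 2" "e 3 - e 0" "U 4" "f 3 - f 0" "V 4"]
    by (simp add: mm)
  moreover have "m 1 1 * (m 2 2 * m 3 4 - m 2 4 * m 3 2) - m 1 2 * (m 2 1 * m 3 4 - m 2 4 * m 3 1)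
      + m 1 4 * (m 2 1 * m 3 2 - m 2 2 * m 3 1) = 1/108"
    unfolding m_def assms(2-) by simp
  ultimately show False by simp
qed

definition rho :: "nat \<Rightarrow> complex^2^2" where
  "rho x = (if x = 0 then pr 1 1 0 else if x = 1 then pr 1 0 1 else if x = 2 then pr (1/2) 1 1 else pr (1/2) 1 \<i>)"

definition pim :: "nat \<Rightarrow> complex^2^2" where
  "pim b = (if b = 0 then pr (1/3) 1 0 else if b = 1 then pr (1/3) 0 1 else if b = 2 then pr (1/6) 1 1
            else if b = 3 then pr (1/6) 1 (-1) else if b = 4 then pr (1/6) 1 \<i> else pr (1/6) 1 (-\<i>))"

definition XX :: "nat set" where "XX = {0,1,2,3}"
definition BB :: "nat set" where "BB = {0,1,2,3,4,5}"

definition Pst :: corr where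
  "Pst = (\<lambda>b x. if b \<in> BB \<and> x \<in> XX then Re (trace (rho x ** pim b)) else 0)"

lemma Pst_in_Q: "Pst \<in> Q_corr XX BB"
proof -
  have "density2 (rho x)" for x
    unfolding density2_def rho_def by (auto simp: psd_pr trace_pr)
  moreover have "povm2 BB pim"
  proof -
    have "\<forall>b\<in>BB. psd2 (pim b)" unfolding BB_def pim_def by (auto simp: psd_pr)
    moreover have "(\<Sum>b\<in>BB. pim b) = mat 1"
      unfolding BB_def pim_def
      by (simp add: vec_eq_iff forall_2 pr_nth mat_def field_simps)
    ultimately show ?thesis unfolding povm2_def by blast
  qed
  ultimately show ?thesis unfolding Q_corr_def Pst_def
    by (intro CollectI exI[of _ rho] exI[of _ pim]) auto
qed

lemma vals:
  "Pst 1 0 = 0"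
  "Pst 2 0 = 1/6"
  "Pst 4 0 = 1/6"
  "Pst 1 1 = 1/3"
  "Pst 2 1 = 1/6"
  "Pst 4 1 = 1/6"
  "Pst 1 2 = 1/6"
  "Pst 2 2 = 1/3"
  "Pst 4 2 = 1/6"
  "Pst 1 3 = 1/6"
  "Pst 2 3 = 1/6"
  "Pst 4 3 = 1/3"
  by (simp_all add: Pst_def XX_def BB_def rho_def pim_def tr_pr)

lemma Pst_not_C2: "Pst \<notin> C2_corr XX BB"
proof
  assume "Pst \<in> C2_corr XX BB"
  then obtain q P0 P1 where q: "0 \<le> q" "q \<le> 1" and P0: "P0 \<in> C_corr XX BB" and P1: "P1 \<in> C_corr XX BB"
    and eq: "Pst = (\<lambda>b x. q * P0 b x + (1 - q) * P1 b x)"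
    unfolding C2_corr_def by blast
  obtain E D where E: "\<forall>x\<in>XX. prob_dist {0,1} (\<lambda>m. E m x)"
    and P0e: "P0 = (\<lambda>b x. if b \<in> BB \<and> x \<in> XX then (\<Sum>m\<in>{0::nat,1}. E m x * D b m) else 0)"
    using P0 unfolding C_corr_def by blast
  obtain E' D' where E': "\<forall>x\<in>XX. prob_dist {0,1} (\<lambda>m. E' m x)"
    and P1e: "P1 = (\<lambda>b x. if b \<in> BB \<and> x \<in> XX then (\<Sum>m\<in>{0::nat,1}. E' m x * D' b m) else 0)"
    using P1 unfolding C_corr_def by blast
  have h: "Pst b x = (q * D b 1 + (1-q) * D' b 1) + E 0 x * (q * (D b 0 - D b 1)) + E' 0 x * ((1-q) * (D' b 0 - D' b 1))"
    if "x \<in> {0,1,2,3}" "b \<in> {1,2,4}" for x b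
  proof -
    have x: "x \<in> XX" and b: "b \<in> BB" using that unfolding XX_def BB_def by auto
    have e1: "E (Suc 0) x = 1 - E 0 x" and e2: "E' (Suc 0) x = 1 - E' 0 x"
      using E x E' unfolding prob_dist_def by auto
    have "Pst b x = q * (E 0 x * D b 0 + E (Suc 0) x * D b (Suc 0)) + (1 - q) * (E' 0 x * D' b 0 + E' (Suc 0) x * D' b (Suc 0))"
      using fun_cong[OF fun_cong[OF eq, of b], of x] x b unfolding P0e P1e by simp
    then show ?thesis unfolding e1 e2 by (simp add: algebra_simps)
  qed
  have v: "Pst b x = Re (trace (rho x ** pim b))" if "x \<in> {0,1,2,3}" "b \<in> {1,2,4}" for x b
    using that unfolding Pst_def XX_def BB_def by auto
  show False
    by (rule no_rank2[OF h vals])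
qed

theorem theorem4:
  shows "\<exists>(X::nat set) (B::nat set) (\<beta>::corr \<Rightarrow> real).
           finite X \<and> X \<noteq> {} \<and> finite B \<and> B \<noteq> {} \<and>
           utility (Q_corr X B) \<beta> > utility (C2_corr X B) \<beta>"
proof (intro exI conjI)
  let ?beta = "\<lambda>P::corr. if P = Pst then 1 else (0::real)"
  show "finite XX" "XX \<noteq> {}" "finite BB" "BB \<noteq> {}" unfolding XX_def BB_def by auto
  have "utility (C2_corr XX BB) ?beta \<le> 0"
    unfolding utility_def using Pst_not_C2 by (auto intro!: SUP_least)
  also have "(0::ereal) < 1" by simp
  also have "1 \<le> utility (Q_corr XX BB) ?beta"
    unfolding utility_def by (rule order_trans[OF _ SUP_upper[OF Pst_in_Q]]) simp
  finally show "utility (Q_corr XX BB) ?beta > utility (C2_corr XX BB) ?beta" .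
qed

end
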